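(* Let $\mathcal{G}=(N,\mathcal{W})$ be an SVG, let $i\neq j$ be players with $j$ a YES-blocker of $\mathcal{G}$, and let $\hat{\mathcal{G}}=\mathcal{G}^{j\to i}$. Let $S\subseteq N\setminus\{i,j\}$ satisfy $S\cup\{i,j\}\notin\mathcal{W}$. Then $$\hat\alpha^-_i(S)\le \alpha^-_i(S)+\alpha^-_j(S),$$ where $\alpha^-$ denotes NO-efficacy scores of the Recursive Measure in $\mathcal{G}$, and $\hat\alpha^-$ denotes the same in $\hat{\mathcal{G}}$.
   Context: A simple voting game (SVG) is a pair $\mathcal{G}=(N,\mathcal{W})$ with $N$ a nonempty finite set of players and $\mathcal{W}\subseteq 2^N$ monotone, $\emptyset\notin\mathcal{W}$, $N\in\mathcal{W}$. Divisions are identified with their YES-sets $S\subseteq N$; $S$ is winning iff $S\in\mathcal{W}$. Decisiveness and success: - Player $k$ is YES-decisive in $S$ if $k\in S\in\mathcal{W}$ and $S\setminus\{k\}\notin\mathcal{W}$. - Player $k$ is NO-decisive in $S$ if $k\notin S\notin\mathcal{W}$ and $S\cup\{k\}\in\mathcal{W}$. - Player $k$ is successful in $S$ if ($k\in S\in\mathcal{W}$) or ($k\notin S\notin\mathcal{W}$). Loyal children: if $S\in\mathcal{W}$, they are the sets $S\setminus\{m\}\in\mathcal{W}$ with $m\in S$. If $S\notin\mathcal{W}$, they are the sets $S\cup\{m\}\notin\mathcal{W}$ with $m\notin S$. Recursive efficacy score $\alpha_k(S)$: - $\alpha_k(S)=1$ if $k$ is YES- or NO-decisive in $S$; - $\alpha_k(S)=0$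 if $k$ is not successful; - otherwise, the average of $\alpha_k$ over the loyal children of $S$. The NO-efficacy score is $\alpha^-_k(S)=\alpha_k(S)$ if $k\notin S$ and $0$ if $k\in S$. Blockers: $j$ is a YES-blocker if $j\in S$ for all $S\in\mathcal{W}$. Donation game: $\mathcal{G}^{j\to i}$ is the SVG on $N$ in which, for $S\subseteq N\setminus\{i,j\}$: - $S\cup\{i,j\}$ and $S\cup\{i\}$ are winning iff $S\cup\{i,j\}\in\mathcal{W}$; - $S\cup\{j\}$ and $S$ are winning iff $S\in\mathcal{W}$. *)

theory Defs
  imports Complex_Main
begin

definition svg :: "'a set \<Rightarrow> 'a set set \<Rightarrow> bool" where
  "svg N W \<longleftrightarrow> finite N \<and> N \<noteq> {} \<and> W \<subseteq> Pow N \<and>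
     (\<forall>S T. S \<in> W \<and> S \<subseteq> T \<and> T \<subseteq> N \<longrightarrow> T \<in> W) \<and>
     {} \<notin> W \<and> N \<in> W"

definition yes_decisive :: "'a set set \<Rightarrow> 'a \<Rightarrow> 'a set \<Rightarrow> bool" where
  "yes_decisive W k S \<longleftrightarrow> k \<in> S \<and> S \<in> W \<and> S - {k} \<notin> W"

definition no_decisive :: "'a set set \<Rightarrow> 'a \<Rightarrow> 'a set \<Rightarrow> bool" where
  "no_decisive W k S \<longleftrightarrow> k \<notin> S \<and> S \<notin> W \<and> insert k S \<in> W"

definition successful :: "'a set set \<Rightarrow> 'a \<Rightarrow> 'a set \<Rightarrow> bool" where
  "successful W k S \<longleftrightarrow> (k \<in> S \<and> S \<in> W) \<or> (k \<notin> S \<and> S \<notin> W)"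

definition loyal_children :: "'a set \<Rightarrow> 'a set set \<Rightarrow> 'a set \<Rightarrow> 'a set set" where
  "loyal_children N W S =
     (if S \<in> W then {S - {m} | m. m \<in> S \<and> S - {m} \<in> W}
      else {insert m S | m. m \<in> N - S \<and> insert m S \<notin> W})"

text \<open>Along loyal children of a winning set the cardinality strictly decreases, and along
  loyal children of a losing set the cardinality strictly increases (within N), so
  fuel card N + 1 always suffices; see alpha below.\<close>
fun alpha_fuel :: "nat \<Rightarrow> 'a set \<Rightarrow> 'a set set \<Rightarrow> 'a \<Rightarrow> 'a set \<Rightarrow> real" where
  "alpha_fuel 0 N W k S = 0"
| "alpha_fuel (Suc n) N W k S =
     (if yes_decisive W k S \<or> no_decisive W k S then 1
      else if \<not> successful W k S then 0
      else (\<Sum>C\<in>loyal_children N W S. alpha_fuel n N W k C) / real (card (loyal_children N W S)))"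

definition alpha :: "'a set \<Rightarrow> 'a set set \<Rightarrow> 'a \<Rightarrow> 'a set \<Rightarrow> real" where
  "alpha N W k S = alpha_fuel (Suc (card N)) N W k S"

definition alpha_no :: "'a set \<Rightarrow> 'a set set \<Rightarrow> 'a \<Rightarrow> 'a set \<Rightarrow> real" where
  "alpha_no N W k S = (if k \<notin> S then alpha N W k S else 0)"

definition yes_blocker :: "'a set set \<Rightarrow> 'a \<Rightarrow> bool" where
  "yes_blocker W j \<longleftrightarrow> (\<forall>S \<in> W. j \<in> S)"

definition donation :: "'a set \<Rightarrow> 'a set set \<Rightarrow> 'a \<Rightarrow> 'a \<Rightarrow> 'a set set" where
  "donation N W j i =
     {T. T \<subseteq> N \<and> (if i \<in> T then (T - {i, j}) \<union> {i, j} \<in> W else T - {i, j} \<in> W)}"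

end

theory Submission
  imports Defs
begin

lemma af_stable:
  assumes fin: "finite N"
  shows "S \<subseteq> N \<Longrightarrow> S \<notin> W \<Longrightarrow> card (N-S) < n \<Longrightarrow> card (N-S) < n'
         \<Longrightarrow> alpha_fuel n N W k S = alpha_fuel n' N W k S"
proof (induction n arbitrary: S n')
  case 0
  then show ?case by simp
next
  case (Suc n)
  then obtain n'' where n': "n' = Suc n''" by (cases n') auto
  have LC: "loyal_children N W S = {insert m S | m. m \<in> N - S \<and> insert m S \<notin> W}"
    using Suc.prems by (simp add: loyal_children_def)
  have "(\<Sum>C\<in>loyal_children N W S. alpha_fuel n N W k C) =
        (\<Sum>C\<in>loyal_children N W S. alpha_fuel n'' N W k C)"
  proof (rule sum.cong)
    fix C assume "C \<in> loyal_children N W S"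
    then obtain m where C: "C = insert m S" "m \<in> N - S" "insert m S \<notin> W" using LC by auto
    have "N - C \<subset> N - S" using C by auto
    then have "card (N - C) < card (N - S)" using fin by (meson finite_Diff psubset_card_mono)
    then show "alpha_fuel n N W k C = alpha_fuel n'' N W k C"
      using Suc.IH[of C n''] Suc.prems C n' by auto
  qed simp
  then show ?case using n' by simp
qed

lemma alpha_rec:
  assumes fin: "finite N" and "S \<subseteq> N" and "S \<notin> W"
  shows "alpha N W k S = (if k \<notin> S \<and> insert k S \<in> W then 1 else if k \<in> S then 0 else
     (\<Sum>m\<in>{m\<in>N-S. insert m S \<notin> W}. alpha N W k (insert m S)) / real (card {m\<in>N-S. insert m S \<notin> W}))"
proof -
  let ?A = "{m\<in>N-S. insert m S \<notin> W}"
  have LC: "loyal_children N W S = (\<lambda>m. insert m S) ` ?A"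
    using assms by (auto simp add: loyal_children_def)
  have inj: "inj_on (\<lambda>m. insert m S) ?A"
    by (rule inj_onI) auto
  have st: "alpha_fuel (card N) N W k (insert m S) = alpha N W k (insert m S)" if "m \<in> ?A" for m
  proof -
    have "N - insert m S \<subset> N" using that by auto
    then have "card (N - insert m S) < card N" using fin by (meson psubset_card_mono)
    then show ?thesis unfolding alpha_def
      using af_stable[OF fin, of "insert m S" W "card N" "Suc (card N)" k] that assms by auto
  qed
  have "alpha N W k S = (if no_decisive W k S then 1 else if \<not> successful W k S then 0 else
     (\<Sum>C\<in>loyal_children N W S. alpha_fuel (card N) N W k C) / real (card (loyal_children N W S)))"
    unfolding alpha_def using assms by (simp add: yes_decisive_def)
  also have "\<dots> = (if k \<notin> S \<and> insert k S \<in> W then 1 else if k \<in> S then 0 else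
     (\<Sum>m\<in>?A. alpha N W k (insert m S)) / real (card ?A))"
    unfolding LC using assms inj st
    by (simp add: no_decisive_def successful_def sum.reindex card_image)
  finally show ?thesis .
qed

lemma af_bounds: "0 \<le> alpha_fuel n N W k S \<and> alpha_fuel n N W k S \<le> 1"
proof (induction n arbitrary: S)
  case 0 then show ?case by simp
next
  case (Suc n)
  let ?L = "loyal_children N W S"
  have s0: "0 \<le> (\<Sum>C\<in>?L. alpha_fuel n N W k C)" using Suc.IH by (simp add: sum_nonneg)
  have s1: "(\<Sum>C\<in>?L. alpha_fuel n N W k C) \<le> real (card ?L)"
    using sum_bounded_above[of ?L "alpha_fuel n N W k" 1] Suc.IH by simp
  have "(\<Sum>C\<in>?L. alpha_fuel n N W k C) / real (card ?L) \<le> 1"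
    using s1 by (cases "card ?L = 0") (auto simp: divide_le_eq)
  then show ?case using s0 by auto
qed

lemma alpha_ge0: "0 \<le> alpha N W k S" unfolding alpha_def using af_bounds by (rule conjunct1)
lemma alpha_le1: "alpha N W k S \<le> 1" unfolding alpha_def using af_bounds by (rule conjunct2)

lemma alpha_one: assumes "finite N" "S \<subseteq> N" "S \<notin> W" "k \<notin> S" "insert k S \<in> W" shows "alpha N W k S = 1"
  using alpha_rec[of N S W k] assms by simp
lemma alpha_zero: assumes "finite N" "S \<subseteq> N" "S \<notin> W" "k \<in> S" shows "alpha N W k S = 0"
  using alpha_rec[of N S W k] assms by simp
lemma alpha_avg: assumes "finite N" "S \<subseteq> N" "S \<notin> W" "k \<notin> S" "insert k S \<notin> W"
   "{m\<in>N-S. insert m S \<notin> W} = A" shows "alpha N W k S = (\<Sum>m\<in>A. alpha N W k (insert m S)) / real (card A)"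
  using alpha_rec[of N S W k] assms by simp

context
  fixes N :: "'a set" and W :: "'a set set" and i j :: 'a
  assumes svg: "svg N W" and iN: "i \<in> N" and jN: "j \<in> N" and ij: "i \<noteq> j"
    and bl: "yes_blocker W j"
begin

lemma fin: "finite N" using svg by (simp add: svg_def)
lemma mono: "S \<in> W \<Longrightarrow> S \<subseteq> T \<Longrightarrow> T \<subseteq> N \<Longrightarrow> T \<in> W"
  using svg unfolding svg_def by blast
lemma noj: "j \<notin> S \<Longrightarrow> S \<notin> W" using bl by (auto simp: yes_blocker_def)

lemma don: "T \<subseteq> N \<Longrightarrow> (T \<in> donation N W j i) = (i \<in> T \<and> insert i (insert j T) \<in> W)"
proof -
  assume T: "T \<subseteq> N"
  have "j \<notin> T - {i, j}" by auto
  then have "T - {i,j} \<notin> W" by (rule noj)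
  moreover have "i \<in> T \<Longrightarrow> (T - {i, j}) \<union> {i, j} = insert i (insert j T)" by auto
  ultimately show ?thesis using T unfolding donation_def by auto
qed

lemma Qlem: "V \<subseteq> N - {i,j} \<Longrightarrow> alpha N (donation N W j i) i (insert j V)
   \<le> alpha N W i (insert j V) + alpha N W j (insert i V)"
proof (induction "card (N - V)" arbitrary: V rule: less_induct)
  case less
  note V = less.prems
  have VN: "V \<subseteq> N" and iV: "i \<notin> V" and jV: "j \<notin> V" using V by auto
  show ?case
  proof (cases "insert i (insert j V) \<in> W")
    case True
    have "alpha N W j (insert i V) = 1"
      by (rule alpha_one) (use fin VN iN True jV ij noj[of "insert i V"] in \<open>auto simp: insert_commute\<close>)
    then show ?thesis using alpha_le1[of N "donation N W j i" i "insert j V"] alpha_ge0[of N W i "insert j V"]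
      by simp
  next
    case False
    define M where "M = N - V - {i,j}"
    have fM: "finite M" using fin by (simp add: M_def)
    have iM: "i \<notin> M" and jM: "j \<notin> M" by (auto simp: M_def)
    have MN: "\<And>m. m \<in> M \<Longrightarrow> m \<in> N \<and> m \<notin> V" by (auto simp: M_def)
    define M0 where "M0 = {m\<in>M. insert m (insert j V) \<notin> W}"
    have fM0: "finite M0" "M0 \<subseteq> M" using fM by (auto simp: M0_def)
    have jVW: "insert j V \<notin> W"
      using False mono[of "insert j V" "insert i (insert j V)"] iN jN VN by auto
    let ?Wh = "donation N W j i"
    have h1: "alpha N ?Wh i (insert j V) = (\<Sum>m\<in>insert i M. alpha N ?Wh i (insert m (insert j V))) / real (card (insert i M))"
    proof (rule alpha_avg)
      show "{m \<in> N - insert j V. insert m (insert j V) \<notin> ?Wh} = insert i M"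
        using don[of "insert i (insert j V)"] don[of "insert m (insert j V)" for m] False iN jN VN iV ij
        by (auto simp: M_def don insert_commute)
    qed (use fin VN jN iN iV ij False don[of "insert j V"] don[of "insert i (insert j V)"] in \<open>auto simp: insert_commute\<close>)
    have h1a: "alpha N ?Wh i (insert i (insert j V)) = 0"
      by (rule alpha_zero) (use fin VN jN iN False don[of "insert i (insert j V)"] in \<open>auto simp: insert_commute\<close>)
    have h2: "alpha N W i (insert j V) = (\<Sum>m\<in>insert i M0. alpha N W i (insert m (insert j V))) / real (card (insert i M0))"
    proof (rule alpha_avg)
      show "{m \<in> N - insert j V. insert m (insert j V) \<notin> W} = insert i M0"
        using False iN iV ij by (auto simp: M_def M0_def)
    qed (use fin VN jN iV ij False jVW in auto)
    have h2a: "alpha N W i (insert i (insert j V)) = 0"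
      by (rule alpha_zero) (use fin VN jN iN False in auto)
    have h3: "alpha N W j (insert i V) = (\<Sum>m\<in>insert j M. alpha N W j (insert m (insert i V))) / real (card (insert j M))"
    proof (rule alpha_avg)
      show "{m \<in> N - insert i V. insert m (insert i V) \<notin> W} = insert j M"
        using False jN jV ij noj by (auto simp: M_def insert_commute)
    qed (use fin VN iN jV ij False noj in \<open>auto simp: insert_commute\<close>)
    have h3a: "alpha N W j (insert j (insert i V)) = 0"
      by (rule alpha_zero) (use fin VN jN iN False in \<open>auto simp: insert_commute\<close>)
    define f where "f m = alpha N ?Wh i (insert m (insert j V))" for m
    define h where "h m = alpha N W i (insert m (insert j V))" for m
    define g where "g m = alpha N W j (insert m (insert i V))" for m
    have LHS: "alpha N ?Wh i (insert j V) = sum f M / (real (card M) + 1)"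
      using h1 h1a fM iM by (simp add: f_def)
    have R1: "alpha N W i (insert j V) = sum h M0 / (real (card M0) + 1)"
      proof -
      have "i \<notin> M0" using iM fM0 by auto
      then show ?thesis using h2 h2a fM0 by (simp add: h_def)
    qed
    have R2: "alpha N W j (insert i V) = sum g M / (real (card M) + 1)"
      using h3 h3a fM jM by (simp add: g_def)
    have IH: "f m \<le> h m + g m" if "m \<in> M0" for m
    proof -
      have m: "m \<in> N" "m \<notin> V" "m \<noteq> i" "m \<noteq> j" using that MN fM0 iM jM by auto
      have "card (N - insert m V) < card (N - V)"
        using m fin by (intro psubset_card_mono) auto
      from less.hyps[OF this, of] have "alpha N ?Wh i (insert j (insert m V))
        \<le> alpha N W i (insert j (insert m V)) + alpha N W j (insert i (insert m V))"
        using V m by auto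
      then show ?thesis by (simp add: f_def g_def h_def insert_commute)
    qed
    have one: "f m \<le> g m" if "m \<in> M - M0" for m
    proof -
      have m: "m \<in> N" "m \<notin> V" "m \<noteq> i" "m \<noteq> j" and W1: "insert m (insert j V) \<in> W"
        using that MN iM jM by (auto simp: M0_def)
      have "g m = 1" unfolding g_def
      proof (rule alpha_one)
        show "insert j (insert m (insert i V)) \<in> W"
          using mono[OF W1, of "insert j (insert m (insert i V))"] m iN jN VN by auto
      qed (use fin m iN VN jV ij noj in auto)
      then show ?thesis using alpha_le1 f_def by simp
    qed
    have h0: "0 \<le> h m" for m using alpha_ge0 h_def by simp
    have "sum f M = sum f M0 + sum f (M - M0)"
      using fM fM0 by (metis add.commute sum.subset_diff)
    also have "\<dots> \<le> sum (\<lambda>m. h m + g m) M0 + sum g (M - M0)"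
      using IH one by (intro add_mono sum_mono) auto
    also have "\<dots> = sum h M0 + sum g M"
      using fM fM0 by (simp add: sum.distrib) (metis add.commute sum.subset_diff)
    finally have S: "sum f M \<le> sum h M0 + sum g M" .
    have c: "real (card M0) + 1 \<le> real (card M) + 1" using card_mono[OF fM fM0(2)] by simp
    have "sum h M0 / (real (card M) + 1) \<le> sum h M0 / (real (card M0) + 1)"
      using c h0 by (intro divide_left_mono sum_nonneg) auto
    moreover have "sum f M / (real (card M) + 1) \<le> (sum h M0 + sum g M) / (real (card M) + 1)"
      using S by (intro divide_right_mono) auto
    ultimately show ?thesis unfolding LHS R1 R2 by (simp add: add_divide_distrib)
  qed
qed

lemma Plem: "U \<subseteq> N - {i,j} \<Longrightarrow> alpha N (donation N W j i) i U
   \<le> alpha N W i U + alpha N W j U"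
proof (induction "card (N - U)" arbitrary: U rule: less_induct)
  case less
  note U = less.prems
  have UN: "U \<subseteq> N" and iU: "i \<notin> U" and jU: "j \<notin> U" using U by auto
  let ?Wh = "donation N W j i"
  have UW: "U \<notin> W" using noj jU by auto
  define M where "M = N - U - {i,j}"
  have fM: "finite M" using fin by (simp add: M_def)
  have iM: "i \<notin> M" and jM: "j \<notin> M" by (auto simp: M_def)
  have MN: "\<And>m. m \<in> M \<Longrightarrow> m \<in> N \<and> m \<notin> U \<and> m \<noteq> i \<and> m \<noteq> j" by (auto simp: M_def)
  have cc: "card (N - insert m U) < card (N - U)" if "m \<in> M" for m
    using MN[OF that] fin by (intro psubset_card_mono) auto
  have IH: "alpha N ?Wh i (insert m U) \<le> alpha N W i (insert m U) + alpha N W j (insert m U)"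
    if "m \<in> M" for m
    using less.hyps[OF cc[OF that]] MN[OF that] U by auto
  have cM: "card (insert i (insert j M)) = card M + 2" using fM iM jM ij by simp
  show ?case
  proof (cases "insert j U \<in> W")
    case True
    have "alpha N W j U = 1" by (rule alpha_one) (use fin UN UW jU True in auto)
    then show ?thesis using alpha_le1[of N ?Wh i U] alpha_ge0[of N W i U] by simp
  next
    case jUW: False
    have GA: "alpha N W k U = (\<Sum>m\<in>insert i (insert j M). alpha N W k (insert m U)) / real (card (insert i (insert j M)))"
      if "k \<in> {i,j}" "insert k U \<notin> W" for k
    proof (rule alpha_avg)
      show "{m \<in> N - U. insert m U \<notin> W} = insert i (insert j M)"
        using jUW iN jN iU jU ij noj[of "insert m U" for m] by (auto simp: M_def)
    qed (use fin UN UW iU jU that in auto)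
    have a1: "alpha N W i (insert i U) = 0" by (rule alpha_zero) (use fin UN iN jU ij noj[of "insert i U"] in auto)
    have a2: "alpha N W j (insert j U) = 0" by (rule alpha_zero) (use fin UN jN jUW in auto)
    have iUW: "insert i U \<notin> W" using noj jU ij by auto
    define fi where "fi m = alpha N W i (insert m U)" for m
    define fj where "fj m = alpha N W j (insert m U)" for m
    define fh where "fh m = alpha N ?Wh i (insert m U)" for m
    show ?thesis
    proof (cases "insert i (insert j U) \<in> W")
      case True
      have lhs: "alpha N ?Wh i U = 1"
        by (rule alpha_one) (use fin UN iU iN True don[of U] don[of "insert i U"] in \<open>auto simp: insert_commute\<close>)
      have b1: "alpha N W i (insert j U) = 1" by (rule alpha_one) (use fin UN iU jN True jUW in auto)
      have b2: "alpha N W j (insert i U) = 1" by (rule alpha_one) (use fin UN jU iN ij True iUW in \<open>auto simp: insert_commute\<close>)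
      have one: "1 \<le> fi m + fj m" if "m \<in> M" for m
      proof -
        have m: "m \<in> N" "m \<notin> U" "m \<noteq> i" "m \<noteq> j" using MN[OF that] by auto
        have "alpha N ?Wh i (insert m U) = 1"
        proof (rule alpha_one)
          have "insert i (insert j (insert i (insert m U))) \<in> W"
            using mono[OF True, of "insert i (insert j (insert i (insert m U)))"] m iN jN UN by auto
          then show "insert i (insert m U) \<in> ?Wh" using don[of "insert i (insert m U)"] m iN UN by auto
        qed (use fin m UN iU don[of "insert m U"] in auto)
        then show ?thesis using IH[OF that] fi_def fj_def by simp
      qed
      have "real (card M) \<le> sum (\<lambda>m. fi m + fj m) M"
        using sum_mono[of M "\<lambda>_. 1::real" "\<lambda>m. fi m + fj m"] one by simp
      moreover have "alpha N W i U = (1 + sum fi M) / (real (card M) + 2)"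
        using GA[of i] iUW a1 b1 fM iM jM ij by (simp add: fi_def)
      moreover have "alpha N W j U = (1 + sum fj M) / (real (card M) + 2)"
        using GA[of j] jUW a2 b2 fM iM jM ij by (simp add: fj_def)
      ultimately show ?thesis using lhs
        by (simp add: sum.distrib add_divide_distrib[symmetric] le_divide_eq)
    next
      case False
      have Q: "fh j \<le> alpha N W i (insert j U) + alpha N W j (insert i U)"
        using Qlem[OF U] fh_def by simp
      have h0: "fh i = 0"
        by (simp add: fh_def, rule alpha_zero) (use fin UN iN False don[of "insert i U"] in \<open>auto simp: insert_commute\<close>)
      have lhs: "alpha N ?Wh i U = sum fh (insert i (insert j M)) / real (card (insert i (insert j M)))"
        unfolding fh_def
      proof (rule alpha_avg)
        show "{m \<in> N - U. insert m U \<notin> ?Wh} = insert i (insert j M)"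
          using False iN jN UN iU jU ij don[of "insert m U" for m] by (auto simp: M_def insert_commute)
      qed (use fin UN iU iN False don[of U] don[of "insert i U"] in \<open>auto simp: insert_commute\<close>)
      have "alpha N W i U = (alpha N W i (insert j U) + sum fi M) / (real (card M) + 2)"
        using GA[of i] iUW a1 fM iM jM ij by (simp add: fi_def)
      moreover have "alpha N W j U = (alpha N W j (insert i U) + sum fj M) / (real (card M) + 2)"
        using GA[of j] jUW a2 fM iM jM ij by (simp add: fj_def)
      moreover have "alpha N ?Wh i U = (fh j + sum fh M) / (real (card M) + 2)"
        using lhs h0 fM iM jM ij by simp
      moreover have "sum fh M \<le> sum fi M + sum fj M"
        using IH by (simp add: fh_def fi_def fj_def sum.distrib[symmetric] sum_mono)
      ultimately show ?thesis using Q
        by (simp add: add_divide_distrib[symmetric] divide_right_mono)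
    qed
  qed
qed

end

theorem claim1:
  fixes N :: "'a set" and W :: "'a set set" and i j :: 'a and S :: "'a set"
  assumes "svg N W"
    and "i \<in> N" and "j \<in> N" and "i \<noteq> j"
    and "yes_blocker W j"
    and "S \<subseteq> N - {i, j}"
    and "S \<union> {i, j} \<notin> W"
  shows "alpha_no N (donation N W j i) i S \<le> alpha_no N W i S + alpha_no N W j S"
  using Plem[OF assms(1-5) assms(6)] assms(6) by (auto simp: alpha_no_def)

end
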